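(* Let $k\ge0$, $n>2k$ and $0\le m\le\lfloor(n-2k)/2\rfloor$. For $z^n\in\mathcal Z^n$ let $\hat{\mathbf S}_{k,m}(z^n)=(\hat\sigma_{k+1},\dots,\hat\sigma_{n-k})$ be any minimizer of $\tilde L_{\mathbf S}(z^n)$ over $\mathbf S\in\mathcal S^n_{k,m}(z^n)$. Then for all $\epsilon>0$ and all $x^n\in\mathcal X^n$, $$\Pr\Big(L_{\hat{\mathbf S}_{k,m}(Z^n)}(x_{k+1}^{n-k},Z^n)-D_{k,m}(x^n,Z^n)>\epsilon\Big)\le 2(k+1)\exp\Bigg(-(n-2k)\Big[\frac{\epsilon^2}{2(k+1)L_{\max}^2}-2|\mathcal Z|^{2k}\Big\{h\Big(\frac{m}{n-2k}\Big)+\frac{(m+1)\ln N}{n-2k}\Big\}\Big]\Bigg),$$ where $h(x)=-x\ln x-(1-x)\ln(1-x)$ and $N=|\mathcal S|$.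
   Context: Let $\mathcal X,\mathcal Z,\hat{\mathcal X}$ be finite alphabets and $\Pi=\{\Pi(x,z)\}$ a $|\mathcal X|\times|\mathcal Z|$ stochastic matrix (discrete memoryless channel) of full row rank. For deterministic $x^n\in\mathcal X^n$, the channel output $Z^n$ has independent components with $\Pr(Z_t=z)=\Pi(x_t,z)$. Fix a loss $\Lambda:\mathcal X\times\hat{\mathcal X}\to[0,\infty)$, $\Lambda_{\max}=\max_{x,\hat x}\Lambda(x,\hat x)$. Let $\mathcal S$ be the set of all maps $s:\mathcal Z\to\hat{\mathcal X}$. Fix a real $|\mathcal Z|\times|\mathcal X|$ matrix $H$ with $\Pi H=I$; $h(z)\in\mathbb R^{\mathcal X}$ is the column vector equal to the $z$-th row of $H$. For $s\in\mathcal S$, $\rho_x(s)=\sum_z\Lambda(x,s(z))\Pi(x,z)$ and $\ell(z,s)=h(z)^T\rho(s)$. Let $\ell_{\max}=\max_{z,s}\ell(z,s)-\min_{z,s}\ell(z,s)$, $L_{\max}=\Lambda_{\max}+\ell_{\max}$. For $z^n$ and $k+1\le t\le n-k$ let $\mathbf c_t=(z_{t-k}^{t-1},z_{t+1}^{t+k})\in\mathcal Z^{2k}$, and for $\mathbf c\in\mathcal Z^{2k}$ let $\mathcal T(\mathbf c)=\{t:k+1\le t\le n-k,\ \mathbf c_t=\mathbf c\}$. Define $\mathcal S^n_{k,m}(z^n)$ as the set of tuples $\mathbf S=(\sigma_{k+1},\dots,\sigma_{n-k})\in\mathcal S^{n-2k}$ such that for every $\mathbf c\in\mathcal Z^{2k}$,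 writing $\mathcal T(\mathbf c)=\{\tau_1<\dots<\tau_r\}$, the number of $j<r$ with $\sigma_{\tau_j}\ne\sigma_{\tau_{j+1}}$ is at most $m$. For such $\mathbf S$ let $L_{\mathbf S}(x_{k+1}^{n-k},z^n)=\frac1{n-2k}\sum_{t=k+1}^{n-k}\Lambda(x_t,\sigma_t(z_t))$ and $\tilde L_{\mathbf S}(z^n)=\frac1{n-2k}\sum_{t=k+1}^{n-k}\ell(z_t,\sigma_t)$, and let $D_{k,m}(x^n,z^n)=\min_{\mathbf S\in\mathcal S^n_{k,m}(z^n)}L_{\mathbf S}(x_{k+1}^{n-k},z^n)$. *)

theory Defs
  imports Complex_Main "HOL-Library.FuncSet"
begin

text \<open>Sequences are indexed 1..n (as in the paper). Deterministic input x^n is a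
function nat => 'x (only values at 1..n matter). Output sequences z^n range over
the extensional function space on {1..n}.\<close>

definition seqs :: "nat \<Rightarrow> (nat \<Rightarrow> 'z) set" where
  "seqs n = PiE {1..n} (\<lambda>_. UNIV)"

text \<open>Probability of an event for the channel output Z^n, given input x^n
(independent components, Pr(Z_t = z) = Ch (x t) z).\<close>
definition chan_prob :: "('x \<Rightarrow> 'z \<Rightarrow> real) \<Rightarrow> nat \<Rightarrow> (nat \<Rightarrow> 'x) \<Rightarrow> ((nat \<Rightarrow> 'z) \<Rightarrow> bool) \<Rightarrow> real" where
  "chan_prob Ch n x E = (\<Sum>z\<in>seqs n. if E z then (\<Prod>t\<in>{1..n}. Ch (x t) (z t)) else 0)"

definition ctx :: "nat \<Rightarrow> (nat \<Rightarrow> 'z) \<Rightarrow> nat \<Rightarrow> 'z list \<times> 'z list" where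
  "ctx k z t = (map z [t-k..<t], map z [Suc t..<t+k+1])"

definition Tset :: "nat \<Rightarrow> nat \<Rightarrow> (nat \<Rightarrow> 'z) \<Rightarrow> 'z list \<times> 'z list \<Rightarrow> nat set" where
  "Tset k n z c = {t \<in> {k+1..n-k}. ctx k z t = c}"

definition switches :: "(nat \<Rightarrow> 's) \<Rightarrow> nat set \<Rightarrow> nat" where
  "switches \<sigma> T = card {j. Suc j < card T \<and>
      \<sigma> (sorted_list_of_set T ! j) \<noteq> \<sigma> (sorted_list_of_set T ! Suc j)}"

definition Sadm :: "nat \<Rightarrow> nat \<Rightarrow> nat \<Rightarrow> (nat \<Rightarrow> 'z) \<Rightarrow> (nat \<Rightarrow> 'z \<Rightarrow> 'xh) set" where
  "Sadm k m n z = {\<sigma> \<in> PiE {k+1..n-k} (\<lambda>_. UNIV). \<forall>c. switches \<sigma> (Tset k n z c) \<le> m}"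

definition Lemp :: "('x \<Rightarrow> 'xh \<Rightarrow> real) \<Rightarrow> nat \<Rightarrow> nat \<Rightarrow> (nat \<Rightarrow> 'x) \<Rightarrow> (nat \<Rightarrow> 'z) \<Rightarrow> (nat \<Rightarrow> 'z \<Rightarrow> 'xh) \<Rightarrow> real" where
  "Lemp \<Lambda> k n x z \<sigma> = (1 / real (n - 2*k)) * (\<Sum>t\<in>{k+1..n-k}. \<Lambda> (x t) (\<sigma> t (z t)))"

definition rho :: "('x \<Rightarrow> 'xh \<Rightarrow> real) \<Rightarrow> ('x \<Rightarrow> 'z::finite \<Rightarrow> real) \<Rightarrow> 'x \<Rightarrow> ('z \<Rightarrow> 'xh) \<Rightarrow> real" where
  "rho \<Lambda> Ch a s = (\<Sum>z\<in>UNIV. \<Lambda> a (s z) * Ch a z)"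

definition ell :: "('x::finite \<Rightarrow> 'xh \<Rightarrow> real) \<Rightarrow> ('x \<Rightarrow> 'z::finite \<Rightarrow> real) \<Rightarrow> ('z \<Rightarrow> 'x \<Rightarrow> real) \<Rightarrow> 'z \<Rightarrow> ('z \<Rightarrow> 'xh) \<Rightarrow> real" where
  "ell \<Lambda> Ch H z s = (\<Sum>a\<in>UNIV. H z a * rho \<Lambda> Ch a s)"

definition Ltil :: "('x::finite \<Rightarrow> 'xh \<Rightarrow> real) \<Rightarrow> ('x \<Rightarrow> 'z::finite \<Rightarrow> real) \<Rightarrow> ('z \<Rightarrow> 'x \<Rightarrow> real) \<Rightarrow> nat \<Rightarrow> nat \<Rightarrow> (nat \<Rightarrow> 'z) \<Rightarrow> (nat \<Rightarrow> 'z \<Rightarrow> 'xh) \<Rightarrow> real" where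
  "Ltil \<Lambda> Ch H k n z \<sigma> = (1 / real (n - 2*k)) * (\<Sum>t\<in>{k+1..n-k}. ell \<Lambda> Ch H (z t) (\<sigma> t))"

definition Dkm :: "('x \<Rightarrow> 'xh \<Rightarrow> real) \<Rightarrow> nat \<Rightarrow> nat \<Rightarrow> nat \<Rightarrow> (nat \<Rightarrow> 'x) \<Rightarrow> (nat \<Rightarrow> 'z) \<Rightarrow> real" where
  "Dkm \<Lambda> k m n x z = Min ((\<lambda>\<sigma>. Lemp \<Lambda> k n x z \<sigma>) ` Sadm k m n z)"

definition Lam_max :: "('x::finite \<Rightarrow> 'xh::finite \<Rightarrow> real) \<Rightarrow> real" where
  "Lam_max \<Lambda> = Max {\<Lambda> a b | a b. True}"

definition ell_max :: "('x::finite \<Rightarrow> 'xh::finite \<Rightarrow> real) \<Rightarrow> ('x \<Rightarrow> 'z::finite \<Rightarrow> real) \<Rightarrow> ('z \<Rightarrow> 'x \<Rightarrow> real) \<Rightarrow> real" where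
  "ell_max \<Lambda> Ch H = Max {ell \<Lambda> Ch H z s | z s. True} - Min {ell \<Lambda> Ch H z s | z s. True}"

definition L_max where
  "L_max \<Lambda> Ch H = Lam_max \<Lambda> + ell_max \<Lambda> Ch H"

definition bin_entropy :: "real \<Rightarrow> real" where
  "bin_entropy p = - p * ln p - (1 - p) * ln (1 - p)"

end

theory Submission
  imports Defs "HOL-Probability.Hoeffding"
begin


lemma hoeff_lemma_fin:
  fixes w Y :: "'v \<Rightarrow> real"
  assumes fin: "finite V" and w0: "\<And>v. v\<in>V \<Longrightarrow> w v \<ge> 0" and w1: "(\<Sum>v\<in>V. w v) = 1"
    and E0: "(\<Sum>v\<in>V. w v * Y v) = 0"
    and ab: "\<And>v. v\<in>V \<Longrightarrow> a \<le> Y v \<and> Y v \<le> b" and l: "l > 0"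
  shows "(\<Sum>v\<in>V. w v * exp (l * Y v)) \<le> exp (l\<^sup>2 * (b - a)\<^sup>2 / 8)"
proof -
  have "a = (\<Sum>v\<in>V. w v * a)" using w1 by (simp add: sum_distrib_right[symmetric])
  also have "\<dots> \<le> (\<Sum>v\<in>V. w v * Y v)" using ab w0 by (intro sum_mono mult_left_mono) auto
  finally have a0: "a \<le> 0" using E0 by simp
  have "(\<Sum>v\<in>V. w v * Y v) \<le> (\<Sum>v\<in>V. w v * b)" using ab w0 by (intro sum_mono mult_left_mono) auto
  also have "\<dots> = b" using w1 by (simp add: sum_distrib_right[symmetric])
  finally have b0: "0 \<le> b" using E0 by simp
  show ?thesis
  proof (cases "a = b")
    case True
    then have "\<And>v. v\<in>V \<Longrightarrow> Y v = 0" using ab a0 b0 by force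
    then have "(\<Sum>v\<in>V. w v * exp (l * Y v)) = 1" using w1 by simp
    then show ?thesis by simp
  next
    case False
    then have ab': "a < b" using a0 b0 by simp
    have conv: "\<And>v. v\<in>V \<Longrightarrow> exp (l * Y v) \<le> (b - Y v) / (b - a) * exp (l * a) + (Y v - a) / (b - a) * exp (l * b)"
    proof -
      fix v assume v: "v \<in> V"
      define y where "y = (b - Y v) / (b-a)"
      have y: "y \<in> {0..1}"
        using ab[OF v] ab' by (auto simp: y_def)
      have "exp (l * ((1 - y) *\<^sub>R b + y *\<^sub>R a)) \<le> (1 - y) * exp (l * b) + y * exp (l * a)"
        using y l by (intro convex_onD[OF convex_on_exp]) auto
      also have "(1 - y) *\<^sub>R b + y *\<^sub>R a = Y v"
        using ab' by (simp add: y_def divide_simps) (simp add: algebra_simps)?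
      also have "1 - y = (Y v - a) / (b - a)"
        using ab' by (simp add: field_simps y_def)
      finally show "exp (l * Y v) \<le> (b - Y v) / (b - a) * exp (l*a) + (Y v - a)/(b-a) * exp (l*b)"
        by (simp add: y_def)
    qed
    have "(\<Sum>v\<in>V. w v * exp (l * Y v)) \<le> (\<Sum>v\<in>V. w v * ((b - Y v) / (b - a) * exp (l * a) + (Y v - a) / (b - a) * exp (l * b)))"
      using conv w0 by (intro sum_mono mult_left_mono) auto
    also have "\<dots> = ((\<Sum>v\<in>V. w v) * b - (\<Sum>v\<in>V. w v * Y v)) / (b - a) * exp (l * a)
        + ((\<Sum>v\<in>V. w v * Y v) - (\<Sum>v\<in>V. w v) * a) / (b - a) * exp (l * b)"
      by (simp add: sum_distrib_left sum_distrib_right sum_subtractf sum_divide_distrib algebra_simps diff_divide_distrib add_divide_distrib sum.distrib)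
    also have "\<dots> = (b * exp (l * a) - a * exp (l * b)) / (b - a)"
      unfolding w1 E0 using ab' by (simp add: diff_divide_distrib[symmetric] add_divide_distrib[symmetric] mult.commute)
    also have "\<dots> \<le> exp (l\<^sup>2 * (b - a)\<^sup>2 / 8)"
    proof -
      define p where "p = -a / (b - a)"
      define z where "z = l * (b - a)"
      have z: "z > 0" unfolding z_def using ab' l by auto
      have p: "p \<ge> 0" using a0 ab' unfolding p_def by (intro divide_nonneg_pos) auto
      have pos: "1 + p * (exp z - 1) > 0"
      proof -
        have "exp z > 1" using z by simp
        hence "(exp z - 1) * p \<ge> 0" using p by simp
        thus ?thesis by (simp add: mult.commute)
      qed
      have "(b * exp (l * a) - a * exp (l * b)) / (b - a) = exp (-z * p) * (1 + p * (exp z - 1))"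
      proof -
        have zp: "-z*p = l*a" using ab' by (simp add: z_def p_def field_simps)
        have ez: "exp(l*a) * exp z = exp (l*b)" by (simp add: z_def exp_add[symmetric] algebra_simps)
        have "exp (-z * p) * (1 + p * (exp z - 1)) = exp (l*a) + p * (exp(l*a) * exp z - exp (l*a))"
          unfolding zp by (simp add: algebra_simps)
        also have "\<dots> = exp (l*a) + p * (exp(l*b) - exp (l*a))" using ez by simp
        also have "\<dots> = (b * exp (l * a) - a * exp (l * b)) / (b - a)"
          using ab' unfolding p_def by (simp add: field_simps)
        finally show ?thesis by simp
      qed
      also have "\<dots> = exp (-z * p + ln (1 + p * (exp z - 1)))"
        using pos by (simp add: exp_add exp_diff exp_minus field_simps)
      also have "\<dots> \<le> exp (z\<^sup>2 / 8)"
        using Hoeffdings_lemma_aux[of z p] z p by simp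
      finally show ?thesis by (simp add: z_def power_mult_distrib)
    qed
    finally show ?thesis .
  qed
qed



definition pprob :: "nat set \<Rightarrow> (nat \<Rightarrow> 'v \<Rightarrow> real) \<Rightarrow> ((nat \<Rightarrow> 'v) \<Rightarrow> bool) \<Rightarrow> real" where
  "pprob A w E = (\<Sum>z\<in>PiE A (\<lambda>_. UNIV). if E z then (\<Prod>t\<in>A. w t (z t)) else 0)"

lemma hoeff_one_sided:
  fixes w Y :: "nat \<Rightarrow> 'v::finite \<Rightarrow> real"
  assumes A: "finite A" "A \<noteq> {}"
    and w0: "\<And>t v. t\<in>A \<Longrightarrow> w t v \<ge> 0" and w1: "\<And>t. t\<in>A \<Longrightarrow> (\<Sum>v\<in>UNIV. w t v) = 1"
    and E0: "\<And>t. t\<in>A \<Longrightarrow> (\<Sum>v\<in>UNIV. w t v * Y t v) = 0"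
    and bd: "\<And>t v. t\<in>A \<Longrightarrow> c t \<le> Y t v \<and> Y t v \<le> c t + L"
    and L: "L > 0" and a: "a > 0"
  shows "pprob A w (\<lambda>z. (\<Sum>t\<in>A. Y t (z t)) > a) \<le> exp (- 2 * a\<^sup>2 / (real (card A) * L\<^sup>2))"
proof -
  define n where "n = real (card A)"
  have n: "n > 0" using A by (simp add: n_def card_gt_0_iff)
  define l where "l = 4 * a / (n * L\<^sup>2)"
  have l: "l > 0" using n L a by (simp add: l_def)
  have "pprob A w (\<lambda>z. (\<Sum>t\<in>A. Y t (z t)) > a) \<le>
        (\<Sum>z\<in>PiE A (\<lambda>_. UNIV). (\<Prod>t\<in>A. w t (z t)) * exp (l * ((\<Sum>t\<in>A. Y t (z t)) - a)))"
    unfolding pprob_def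
  proof (intro sum_mono)
    fix z :: "nat \<Rightarrow> 'v" assume "z \<in> PiE A (\<lambda>_. UNIV)"
    have p0: "(\<Prod>t\<in>A. w t (z t)) \<ge> 0" using w0 by (intro prod_nonneg) auto
    show "(if (\<Sum>t\<in>A. Y t (z t)) > a then (\<Prod>t\<in>A. w t (z t)) else 0)
          \<le> (\<Prod>t\<in>A. w t (z t)) * exp (l * ((\<Sum>t\<in>A. Y t (z t)) - a))"
    proof (cases "(\<Sum>t\<in>A. Y t (z t)) > a")
      case True
      then have "exp (l * ((\<Sum>t\<in>A. Y t (z t)) - a)) \<ge> 1" using l by simp
      then show ?thesis using True p0 by (simp add: mult_le_cancel_left1)
    qed (use p0 in simp)
  qed
  also have "\<dots> = exp (- l * a) * (\<Sum>z\<in>PiE A (\<lambda>_. UNIV). (\<Prod>t\<in>A. w t (z t) * exp (l * Y t (z t))))"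
  proof -
    have "\<And>z. (\<Prod>t\<in>A. w t (z t)) * exp (l * ((\<Sum>t\<in>A. Y t (z t)) - a))
       = exp (- l * a) * (\<Prod>t\<in>A. w t (z t) * exp (l * Y t (z t)))"
    proof -
      fix z :: "nat \<Rightarrow> 'v"
      have "exp (l * ((\<Sum>t\<in>A. Y t (z t)) - a)) = exp (- l * a) * exp (\<Sum>t\<in>A. l * Y t (z t))"
        by (simp add: sum_distrib_left[symmetric] exp_add[symmetric] algebra_simps)
      also have "exp (\<Sum>t\<in>A. l * Y t (z t)) = (\<Prod>t\<in>A. exp (l * Y t (z t)))"
        by (rule exp_sum) (use A in simp)
      finally show "(\<Prod>t\<in>A. w t (z t)) * exp (l * ((\<Sum>t\<in>A. Y t (z t)) - a))
       = exp (- l * a) * (\<Prod>t\<in>A. w t (z t) * exp (l * Y t (z t)))"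
        by (simp add: prod.distrib)
    qed
    then show ?thesis by (simp add: sum_distrib_left)
  qed
  also have "(\<Sum>z\<in>PiE A (\<lambda>_. UNIV). (\<Prod>t\<in>A. w t (z t) * exp (l * Y t (z t))))
      = (\<Prod>t\<in>A. \<Sum>v\<in>UNIV. w t v * exp (l * Y t v))"
    by (rule prod_sum_PiE[symmetric]) (use A in auto)
  also have "\<dots> \<le> (\<Prod>t\<in>A. exp (l\<^sup>2 * L\<^sup>2 / 8))"
  proof (intro prod_mono conjI)
    fix t assume t: "t \<in> A"
    show "0 \<le> (\<Sum>v\<in>UNIV. w t v * exp (l * Y t v))" using w0 t by (intro sum_nonneg) auto
    have "(\<Sum>v\<in>UNIV. w t v * exp (l * Y t v)) \<le> exp (l\<^sup>2 * ((c t + L) - c t)\<^sup>2 / 8)"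
      by (rule hoeff_lemma_fin) (use w0 w1 E0 bd t l in auto)
    then show "(\<Sum>v\<in>UNIV. w t v * exp (l * Y t v)) \<le> exp (l\<^sup>2 * L\<^sup>2 / 8)" by simp
  qed
  also have "\<dots> = exp (n * (l\<^sup>2 * L\<^sup>2 / 8))" by (simp add: n_def exp_of_nat_mult[symmetric])
  finally have "pprob A w (\<lambda>z. (\<Sum>t\<in>A. Y t (z t)) > a) \<le> exp (- l * a) * exp (n * (l\<^sup>2 * L\<^sup>2 / 8))"
    by simp
  also have "\<dots> = exp (- l * a + n * (l\<^sup>2 * L\<^sup>2 / 8))" by (simp only: exp_add)
  also have "- l * a + n * (l\<^sup>2 * L\<^sup>2 / 8) = - 2 * a\<^sup>2 / (n * L\<^sup>2)"
    using n L by (simp add: l_def field_simps power2_eq_square)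
  finally show ?thesis by (simp add: n_def)
qed



lemma pprob_union:
  fixes w :: "nat \<Rightarrow> 'v::finite \<Rightarrow> real"
  assumes fin: "finite A" "finite G" and w0: "\<And>t v. t\<in>A \<Longrightarrow> w t v \<ge> 0"
    and cov: "\<And>z. z \<in> PiE A (\<lambda>_. UNIV) \<Longrightarrow> E z \<Longrightarrow> \<exists>g\<in>G. P g z"
  shows "pprob A w E \<le> (\<Sum>g\<in>G. pprob A w (P g))"
  unfolding pprob_def
  apply (subst sum.swap)
proof (intro sum_mono)
  fix z :: "nat \<Rightarrow> 'v" assume z: "z \<in> PiE A (\<lambda>_. UNIV)"
  have p0: "(\<Prod>t\<in>A. w t (z t)) \<ge> 0" using w0 by (intro prod_nonneg) auto
  show "(if E z then \<Prod>t\<in>A. w t (z t) else 0) \<le> (\<Sum>g\<in>G. if P g z then \<Prod>t\<in>A. w t (z t) else 0)"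
  proof (cases "E z")
    case True
    then obtain g where g: "g \<in> G" "P g z" using cov z by blast
    have "(if P g z then \<Prod>t\<in>A. w t (z t) else 0) \<le> (\<Sum>g\<in>G. if P g z then \<Prod>t\<in>A. w t (z t) else 0)"
      by (rule member_le_sum) (use g p0 fin in auto)
    then show ?thesis using True g by simp
  qed (use p0 in \<open>auto intro!: sum_nonneg\<close>)
qed

lemma hoeff_two_sided:
  fixes w Y :: "nat \<Rightarrow> 'v::finite \<Rightarrow> real"
  assumes A: "finite A" "A \<noteq> {}"
    and w0: "\<And>t v. t\<in>A \<Longrightarrow> w t v \<ge> 0" and w1: "\<And>t. t\<in>A \<Longrightarrow> (\<Sum>v\<in>UNIV. w t v) = 1"
    and E0: "\<And>t. t\<in>A \<Longrightarrow> (\<Sum>v\<in>UNIV. w t v * Y t v) = 0"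
    and bd: "\<And>t v. t\<in>A \<Longrightarrow> c t \<le> Y t v \<and> Y t v \<le> c t + L"
    and L: "L > 0" and a: "a > 0"
  shows "pprob A w (\<lambda>z. \<bar>\<Sum>t\<in>A. Y t (z t)\<bar> > a) \<le> 2 * exp (- 2 * a\<^sup>2 / (real (card A) * L\<^sup>2))"
proof -
  let ?P = "\<lambda>b::bool. \<lambda>z. (\<Sum>t\<in>A. (if b then Y t (z t) else - Y t (z t))) > a"
  have "pprob A w (\<lambda>z. \<bar>\<Sum>t\<in>A. Y t (z t)\<bar> > a) \<le> (\<Sum>b\<in>UNIV. pprob A w (?P b))"
  proof (rule pprob_union)
    fix z :: "nat \<Rightarrow> 'v" assume "\<bar>\<Sum>t\<in>A. Y t (z t)\<bar> > a"
    then show "\<exists>b\<in>UNIV. ?P b z"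
    proof (cases "(\<Sum>t\<in>A. Y t (z t)) \<ge> 0")
      case True
      then show ?thesis using \<open>\<bar>\<Sum>t\<in>A. Y t (z t)\<bar> > a\<close> by (intro bexI[of _ True]) auto
    next
      case False
      then show ?thesis using \<open>\<bar>\<Sum>t\<in>A. Y t (z t)\<bar> > a\<close> by (intro bexI[of _ False]) (auto simp: sum_negf)
    qed
  qed (use A w0 in auto)
  also have "\<dots> = pprob A w (?P True) + pprob A w (?P False)"
    by (simp add: UNIV_bool add.commute)
  also have "pprob A w (?P True) \<le> exp (- 2 * a\<^sup>2 / (real (card A) * L\<^sup>2))"
    using hoeff_one_sided[OF A w0 w1 E0 bd L a] by simp
  also have "pprob A w (?P False) \<le> exp (- 2 * a\<^sup>2 / (real (card A) * L\<^sup>2))"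
  proof -
    have "pprob A w (\<lambda>z. (\<Sum>t\<in>A. (\<lambda>t v. - Y t v) t (z t)) > a) \<le> exp (- 2 * a\<^sup>2 / (real (card A) * L\<^sup>2))"
    proof (rule hoeff_one_sided[OF A w0 w1 _ _ L a, where c = "\<lambda>t. - c t - L"])
      fix t assume t: "t \<in> A"
      show "(\<Sum>v\<in>UNIV. w t v * - Y t v) = 0" using E0[OF t] by (simp add: sum_negf)
      fix v show "- c t - L \<le> - Y t v \<and> - Y t v \<le> - c t - L + L" using bd[OF t, of v] by auto
    qed
    then show ?thesis by simp
  qed
  finally show ?thesis by simp
qed

definition merge :: "nat set \<Rightarrow> (nat \<Rightarrow> 'v) \<Rightarrow> (nat \<Rightarrow> 'v) \<Rightarrow> nat \<Rightarrow> 'v" where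
  "merge A zA zB = (\<lambda>t. if t \<in> A then zA t else zB t)"

lemma pprob_split:
  fixes w :: "nat \<Rightarrow> 'v::finite \<Rightarrow> real"
  assumes I: "finite I" and AI: "A \<subseteq> I"
  shows "pprob I w E = (\<Sum>zB\<in>PiE (I - A) (\<lambda>_. UNIV). (\<Prod>t\<in>I - A. w t (zB t)) *
            pprob A w (\<lambda>zA. E (merge A zA zB)))"
proof -
  define h :: "(nat \<Rightarrow> 'v) \<times> (nat \<Rightarrow> 'v) \<Rightarrow> nat \<Rightarrow> 'v" where "h = (\<lambda>(zB, zA). merge A zA zB)"
  have bij: "bij_betw h (PiE (I - A) (\<lambda>_. UNIV) \<times> PiE A (\<lambda>_. UNIV)) (PiE I (\<lambda>_. UNIV :: 'v set))"
  proof (rule bij_betwI[where g = "\<lambda>z. (restrict z (I - A), restrict z A)"])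
    show "h \<in> PiE (I - A) (\<lambda>_. UNIV) \<times> PiE A (\<lambda>_. UNIV) \<rightarrow> PiE I (\<lambda>_. UNIV)"
      using AI by (auto simp: h_def merge_def PiE_def extensional_def)
    show "(\<lambda>z. (restrict z (I - A), restrict z A)) \<in> PiE I (\<lambda>_. UNIV) \<rightarrow> PiE (I - A) (\<lambda>_. UNIV) \<times> PiE A (\<lambda>_. UNIV)"
      by auto
    fix p :: "(nat \<Rightarrow> 'v) \<times> (nat \<Rightarrow> 'v)" assume "p \<in> PiE (I - A) (\<lambda>_. UNIV) \<times> PiE A (\<lambda>_. UNIV)"
    then show "(restrict (h p) (I - A), restrict (h p) A) = p"
      by (cases p) (auto simp: h_def merge_def PiE_def extensional_def restrict_def fun_eq_iff)
  next
    fix z :: "nat \<Rightarrow> 'v" assume "z \<in> PiE I (\<lambda>_. UNIV)"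
    then show "h (restrict z (I - A), restrict z A) = z"
      using AI by (auto simp: h_def merge_def PiE_def extensional_def restrict_def fun_eq_iff)
  qed
  have prod_split: "(\<Prod>t\<in>I. w t (merge A zA zB t)) = (\<Prod>t\<in>A. w t (zA t)) * (\<Prod>t\<in>I - A. w t (zB t))"
    for zA zB :: "nat \<Rightarrow> 'v"
  proof -
    have "(\<Prod>t\<in>I. w t (merge A zA zB t)) = (\<Prod>t\<in>A. w t (merge A zA zB t)) * (\<Prod>t\<in>I - A. w t (merge A zA zB t))"
      using I AI by (metis mult.commute prod.subset_diff)
    also have "(\<Prod>t\<in>A. w t (merge A zA zB t)) = (\<Prod>t\<in>A. w t (zA t))"
      by (intro prod.cong) (auto simp: merge_def)
    also have "(\<Prod>t\<in>I - A. w t (merge A zA zB t)) = (\<Prod>t\<in>I - A. w t (zB t))"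
      by (intro prod.cong) (auto simp: merge_def)
    finally show ?thesis .
  qed
  have "pprob I w E = (\<Sum>p\<in>PiE (I - A) (\<lambda>_. UNIV) \<times> PiE A (\<lambda>_. UNIV).
          (\<lambda>z. if E z then \<Prod>t\<in>I. w t (z t) else 0) (h p))"
    unfolding pprob_def by (rule sum.reindex_bij_betw[OF bij, symmetric])
  also have "\<dots> = (\<Sum>zB\<in>PiE (I - A) (\<lambda>_. UNIV). \<Sum>zA\<in>PiE A (\<lambda>_. UNIV).
          (if E (merge A zA zB) then (\<Prod>t\<in>A. w t (zA t)) * (\<Prod>t\<in>I - A. w t (zB t)) else 0))"
  proof -
    have hp: "\<And>p. h p = merge A (snd p) (fst p)" by (simp add: h_def case_prod_beta)
    show ?thesis unfolding sum.cartesian_product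
      by (intro sum.cong refl) (auto simp: hp prod_split[symmetric] case_prod_beta)
  qed
  also have "\<dots> = (\<Sum>zB\<in>PiE (I - A) (\<lambda>_. UNIV). (\<Prod>t\<in>I - A. w t (zB t)) *
            pprob A w (\<lambda>zA. E (merge A zA zB)))"
    unfolding pprob_def by (intro sum.cong refl) (auto simp: sum_distrib_left intro!: sum.cong)
  finally show ?thesis .
qed

lemma sum_prod_PiE_1:
  fixes w :: "nat \<Rightarrow> 'v::finite \<Rightarrow> real"
  assumes "finite B" "\<And>t. t \<in> B \<Longrightarrow> (\<Sum>v\<in>UNIV. w t v) = 1"
  shows "(\<Sum>zB\<in>PiE B (\<lambda>_. UNIV). (\<Prod>t\<in>B. w t (zB t))) = 1"
proof -
  have "(\<Sum>zB\<in>PiE B (\<lambda>_. UNIV). (\<Prod>t\<in>B. w t (zB t))) = (\<Prod>t\<in>B. \<Sum>v\<in>UNIV. w t v)"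
    by (rule prod_sum_PiE[symmetric]) (use assms in auto)
  also have "\<dots> = 1" using assms by simp
  finally show ?thesis .
qed



definition sw :: "(nat \<Rightarrow> 's) \<Rightarrow> nat set \<Rightarrow> nat set" where
  "sw \<sigma> S = {t\<in>S. (\<exists>u\<in>S. u<t) \<and> \<sigma> t \<noteq> \<sigma> (Max {u\<in>S. u<t})}"

lemma sw_subset: "sw \<sigma> S \<subseteq> S" by (auto simp: sw_def)

lemma switches_sw:
  assumes S: "finite S"
  shows "switches \<sigma> S = card (sw \<sigma> S)"
proof -
  define l where "l = sorted_list_of_set S"
  have len: "length l = card S" and setl: "set l = S" and ss: "sorted_wrt (<) l"
    using S by (auto simp: l_def)
  have lt_iff: "l!i < l!j \<longleftrightarrow> i < j" if "i < length l" "j < length l" for i j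
    using sorted_wrt_nth_less[OF ss, of i j] sorted_wrt_nth_less[OF ss, of j i] that
    by (metis less_asym nat_neq_iff)
  have pred: "Max {u\<in>S. u < l!Suc j} = l!j" if "Suc j < length l" for j
  proof (rule Max_eqI)
    show "finite {u\<in>S. u < l!Suc j}" using S by simp
    show "l!j \<in> {u\<in>S. u < l!Suc j}" using that lt_iff[of j "Suc j"] setl by auto
    fix u assume "u \<in> {u\<in>S. u < l!Suc j}"
    then obtain i where i: "i < length l" "u = l!i" "u < l!Suc j" using setl by (auto simp: in_set_conv_nth)
    then have "i < Suc j" using lt_iff[of i "Suc j"] that by auto
    then show "u \<le> l!j" using i lt_iff[of j i] that by (cases "i = j") auto
  qed
  define Js where "Js = {j. Suc j < card S \<and> \<sigma> (l ! j) \<noteq> \<sigma> (l ! Suc j)}"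
  have img: "sw \<sigma> S = (\<lambda>j. l ! Suc j) ` Js"
  proof (intro equalityI subsetI)
    fix t assume t: "t \<in> sw \<sigma> S"
    then obtain i where i: "i < length l" "t = l!i" using setl by (auto simp: sw_def in_set_conv_nth)
    from t obtain u where u: "u \<in> S" "u < t" by (auto simp: sw_def)
    then obtain i' where "i' < length l" "u = l!i'" using setl by (auto simp: in_set_conv_nth)
    then have "i' < i" using lt_iff i u by auto
    then obtain j where j: "i = Suc j" using not0_implies_Suc by fastforce
    have "\<sigma> (l!j) \<noteq> \<sigma> (l!Suc j)" using t pred[of j] i j by (auto simp: sw_def)
    then show "t \<in> (\<lambda>j. l ! Suc j) ` Js" using i j len by (auto simp: Js_def)
  next
    fix t assume "t \<in> (\<lambda>j. l ! Suc j) ` Js"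
    then obtain j where j: "Suc j < length l" "t = l!Suc j" "\<sigma> (l ! j) \<noteq> \<sigma> (l ! Suc j)"
      using len by (auto simp: Js_def)
    have "l!j \<in> S" "l!j < t" using j setl lt_iff[of j "Suc j"] by auto
    moreover have "t \<in> S" using j setl by auto
    ultimately show "t \<in> sw \<sigma> S" using pred[of j] j by (auto simp: sw_def)
  qed
  have inj: "inj_on (\<lambda>j. l ! Suc j) Js"
  proof (rule inj_onI)
    fix x y assume x: "x \<in> Js" and y: "y \<in> Js" and e: "l ! Suc x = l ! Suc y"
    have xl: "Suc x < length l" "Suc y < length l" using x y len by (auto simp: Js_def)
    show "x = y"
    proof (rule ccontr)
      assume "x \<noteq> y"
      then consider "Suc x < Suc y" | "Suc y < Suc x" by linarith
      then show False using lt_iff[OF xl(1) xl(2)] lt_iff[OF xl(2) xl(1)] e by cases auto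
    qed
  qed
  show ?thesis unfolding switches_def img card_image[OF inj]
    by (simp add: Js_def l_def)
qed

lemma sw_mono:
  assumes S: "finite S" and sub: "S' \<subseteq> S"
  shows "card (sw \<sigma> S') \<le> card (sw \<sigma> S)"
proof -
  have S': "finite S'" using S sub finite_subset by blast
  define p where "p = (\<lambda>t. Max {u\<in>S'. u<t})"
  define \<phi> where "\<phi> = (\<lambda>t. Min {u\<in>S. p t < u \<and> u \<le> t \<and> \<sigma> u \<noteq> \<sigma> (p t)})"
  have key: "\<phi> t \<in> sw \<sigma> S \<and> p t < \<phi> t \<and> \<phi> t \<le> t" if t: "t \<in> sw \<sigma> S'" for t
  proof -
    have tS': "t \<in> S'" and ex: "\<exists>u\<in>S'. u<t" and neq: "\<sigma> t \<noteq> \<sigma> (p t)"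
      using t by (auto simp: sw_def p_def)
    have "Max {u\<in>S'. u<t} \<in> {u\<in>S'. u<t}" by (rule Max_in) (use S' ex in auto)
    then have pt: "p t \<in> S'" "p t < t" by (auto simp: p_def)
    define U where "U = {u\<in>S. p t < u \<and> u \<le> t \<and> \<sigma> u \<noteq> \<sigma> (p t)}"
    have tU: "t \<in> U" using tS' sub pt neq by (auto simp: U_def)
    have fU: "finite U" using S by (simp add: U_def)
    have "Min U \<in> U" by (rule Min_in[OF fU]) (use tU in auto)
    then have uU: "\<phi> t \<in> U" by (simp add: \<phi>_def U_def)
    have minU: "\<And>v. v \<in> U \<Longrightarrow> \<phi> t \<le> v" using Min_le[OF fU] by (auto simp: \<phi>_def U_def)
    define u where "u = \<phi> t"
    have u: "u \<in> S" "p t < u" "u \<le> t" "\<sigma> u \<noteq> \<sigma> (p t)" using uU by (auto simp: U_def u_def)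
    have ptS: "p t \<in> S" using pt sub by auto
    define q where "q = Max {v\<in>S. v<u}"
    have "Max {v\<in>S. v<u} \<in> {v\<in>S. v<u}" by (rule Max_in) (use S ptS u in auto)
    then have q: "q \<in> S" "q < u" by (auto simp: q_def)
    have "p t \<le> q" using Max_ge[of "{v\<in>S. v<u}" "p t"] S ptS u by (auto simp: q_def)
    have "\<sigma> q = \<sigma> (p t)"
    proof (rule ccontr)
      assume "\<sigma> q \<noteq> \<sigma> (p t)"
      then have "q \<noteq> p t" by auto
      with \<open>p t \<le> q\<close> have "q \<in> U" using q u \<open>\<sigma> q \<noteq> \<sigma> (p t)\<close> by (auto simp: U_def)
      then have "u \<le> q" using minU by (auto simp: u_def)
      then show False using q by simp
    qed
    then have "u \<in> sw \<sigma> S" using u ptS by (auto simp: sw_def q_def)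
    then show ?thesis using u by (simp add: u_def)
  qed
  have inj: "inj_on \<phi> (sw \<sigma> S')"
  proof (rule inj_onI)
    fix t1 t2 assume t1: "t1 \<in> sw \<sigma> S'" and t2: "t2 \<in> sw \<sigma> S'" and eq: "\<phi> t1 = \<phi> t2"
    have le: "\<phi> a < \<phi> b" if a: "a \<in> sw \<sigma> S'" and b: "b \<in> sw \<sigma> S'" and ab: "a < b" for a b
    proof -
      have "a \<le> p b" using Max_ge[of "{u\<in>S'. u<b}" a] S' a ab by (auto simp: p_def sw_def)
      then show ?thesis using key[OF a] key[OF b] by linarith
    qed
    show "t1 = t2"
    proof (rule ccontr)
      assume "t1 \<noteq> t2"
      then consider "t1 < t2" | "t2 < t1" by linarith
      then show False using le[OF t1 t2] le[OF t2 t1] eq by cases auto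
    qed
  qed
  have "card (sw \<sigma> S') = card (\<phi> ` sw \<sigma> S')" using card_image[OF inj] by simp
  also have "\<dots> \<le> card (sw \<sigma> S)"
    by (rule card_mono) (use S key in \<open>auto intro: finite_subset[OF sw_subset]\<close>)
  finally show ?thesis .
qed



lemma count_J:
  assumes A: "finite A" "card A \<le> M" and p: "0 < p" "p \<le> 1/2"
  shows "real (card {J. J \<subseteq> A \<and> card J \<le> q}) \<le> exp (real q * ln ((1-p)/p) - real M * ln (1-p))"
proof -
  define JJ where "JJ = {J. J \<subseteq> A \<and> card J \<le> q}"
  define r where "r = p / (1 - p)"
  have r: "0 < r" "r \<le> 1" using p by (auto simp: r_def field_simps)
  have p1: "0 < 1 - p" "1 - p \<le> 1" using p by auto
  have fJJ: "finite JJ" using A by (auto simp: JJ_def)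
  have "(1::real) = (\<Prod>a\<in>A. p + (1 - p))" by simp
  also have "\<dots> = (\<Sum>J\<in>Pow A. (\<Prod>a\<in>J. p) * (\<Prod>a\<in>A - J. 1 - p))"
    by (rule prod_add) (use A in auto)
  also have "\<dots> \<ge> (\<Sum>J\<in>JJ. (\<Prod>a\<in>J. p) * (\<Prod>a\<in>A - J. 1 - p))"
    by (rule sum_mono2) (use A p in \<open>auto simp: JJ_def intro!: mult_nonneg_nonneg\<close>)
  also have "(\<Sum>J\<in>JJ. (\<Prod>a\<in>J. p) * (\<Prod>a\<in>A - J. 1 - p)) \<ge> (\<Sum>J\<in>JJ. r ^ q * (1 - p) ^ M)"
  proof (rule sum_mono)
    fix J assume J: "J \<in> JJ"
    then have JA: "J \<subseteq> A" and cJ: "card J \<le> q" by (auto simp: JJ_def)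
    have cd: "card (A - J) = card A - card J" using JA A by (simp add: card_Diff_subset finite_subset)
    have cle: "card J \<le> card A" using JA A card_mono by blast
    have "(\<Prod>a\<in>J. p) * (\<Prod>a\<in>A - J. 1 - p) = p ^ card J * (1 - p) ^ (card A - card J)"
      by (simp add: cd)
    also have "\<dots> = r ^ card J * (1 - p) ^ card A"
      using p1 cle by (simp add: r_def power_divide power_diff field_simps)
    also have "\<dots> \<ge> r ^ q * (1 - p) ^ M"
      by (intro mult_mono power_decreasing) (use r p1 cJ A in auto)
    finally show "r ^ q * (1 - p) ^ M \<le> (\<Prod>a\<in>J. p) * (\<Prod>a\<in>A - J. 1 - p)" .
  qed
  finally have "real (card JJ) * (r ^ q * (1 - p) ^ M) \<le> 1" by simp
  then have "real (card JJ) \<le> 1 / (r ^ q * (1 - p) ^ M)"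
    using r p1 by (simp add: field_simps)
  also have "1 / (r ^ q * (1 - p) ^ M) = exp (real q * ln ((1-p)/p) - real M * ln (1-p))"
  proof -
    have "r ^ q * (1 - p) ^ M = exp (real q * ln r + real M * ln (1 - p))"
      using r p1 by (simp add: exp_add exp_of_nat_mult[symmetric] ln_realpow[symmetric])
    moreover have "ln ((1-p)/p) = - ln r" using p1 p by (simp add: r_def ln_div)
    ultimately show ?thesis by (simp add: exp_minus[symmetric] exp_diff[symmetric] divide_inverse)
  qed
  finally show ?thesis by (simp add: JJ_def)
qed

lemma count_G:
  fixes cf :: "nat \<Rightarrow> 'c"
  assumes A: "finite A" and Cs: "finite Cs" "cf ` A \<subseteq> Cs" "card Cs \<le> K"
  shows "card {g \<in> PiE A (\<lambda>_. UNIV :: 's::finite set). \<forall>c. card (sw g {t\<in>A. cf t = c}) \<le> m}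
     \<le> card {J. J \<subseteq> A \<and> card J \<le> K * m} * CARD('s) ^ (K * (m + 1))"
proof -
  define G where "G = {g \<in> PiE A (\<lambda>_. UNIV :: 's set). \<forall>c. card (sw g {t\<in>A. cf t = c}) \<le> m}"
  define cls where "cls = (\<lambda>c. {t\<in>A. cf t = c})"
  define F where "F = {t\<in>A. \<not> (\<exists>u\<in>A. u<t \<and> cf u = cf t)}"
  define Jg where "Jg = (\<lambda>g::nat \<Rightarrow> 's. {t\<in>A. t \<in> sw g (cls (cf t))})"
  define JJ where "JJ = {J. J \<subseteq> A \<and> card J \<le> K * m}"
  define code where "code = (\<lambda>g::nat \<Rightarrow> 's. (Jg g, restrict g (Jg g \<union> F)))"
  have fF: "finite F" using A by (simp add: F_def)
  have cF: "card F \<le> K"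
  proof -
    have "inj_on cf F"
    proof (rule inj_onI)
      fix a b assume a: "a \<in> F" and b: "b \<in> F" and e: "cf a = cf b"
      show "a = b"
      proof (rule ccontr)
        assume "a \<noteq> b"
        then consider "a < b" | "b < a" by linarith
        then show False using a b e by cases (auto simp: F_def)
      qed
    qed
    then have "card F = card (cf ` F)" by (simp add: card_image)
    also have "\<dots> \<le> card Cs" by (rule card_mono) (use Cs in \<open>auto simp: F_def\<close>)
    finally show ?thesis using Cs by simp
  qed
  have Jg_UN: "Jg g = (\<Union>c\<in>Cs. sw g (cls c))" for g
    using sw_subset Cs(2) by (fastforce simp: Jg_def cls_def)
  have JgJJ: "Jg g \<in> JJ" if g: "g \<in> G" for g
  proof -
    have "card (Jg g) \<le> (\<Sum>c\<in>Cs. card (sw g (cls c)))"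
      unfolding Jg_UN by (rule card_UN_le[OF Cs(1)])
    also have "\<dots> \<le> (\<Sum>c\<in>Cs. m)" using g by (intro sum_mono) (auto simp: G_def cls_def)
    also have "\<dots> \<le> K * m" using Cs by simp
    finally show ?thesis by (auto simp: JJ_def Jg_def)
  qed
  have sub: "code ` G \<subseteq> Sigma JJ (\<lambda>J. PiE (J \<union> F) (\<lambda>_. UNIV))"
  proof
    fix y assume "y \<in> code ` G"
    then obtain g where g: "g \<in> G" "y = code g" by blast
    have "restrict g (Jg g \<union> F) \<in> PiE (Jg g \<union> F) (\<lambda>_. UNIV)" by simp
    then show "y \<in> Sigma JJ (\<lambda>J. PiE (J \<union> F) (\<lambda>_. UNIV))"
      using g JgJJ[OF g(1)] by (simp add: code_def)
  qed
  have inj: "inj_on code G"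
  proof (rule inj_onI)
    fix g1 g2 assume g1: "g1 \<in> G" and g2: "g2 \<in> G" and e: "code g1 = code g2"
    define J where "J = Jg g1"
    have J2: "Jg g2 = J" and r: "restrict g1 (J \<union> F) = restrict g2 (J \<union> F)"
      using e by (auto simp: code_def J_def)
    have "\<forall>t\<in>A. g1 t = g2 t"
    proof (intro ballI)
      fix t show "t \<in> A \<Longrightarrow> g1 t = g2 t"
      proof (induction t rule: less_induct)
        case (less t)
        show ?case
        proof (cases "t \<in> J \<union> F")
          case True
          then show ?thesis using r by (metis restrict_apply')
        next
          case False
          define P where "P = cls (cf t)"
          have tP: "t \<in> P" using less.prems by (simp add: P_def cls_def)
          have ex: "\<exists>u\<in>P. u < t" using False less.prems by (auto simp: F_def P_def cls_def)
          define pr where "pr = Max {u\<in>P. u<t}"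
          have "Max {u\<in>P. u<t} \<in> {u\<in>P. u<t}" by (rule Max_in) (use ex A in \<open>auto simp: P_def cls_def\<close>)
          then have pr: "pr \<in> A" "pr < t" by (auto simp: pr_def P_def cls_def)
          have "t \<notin> Jg g1" "t \<notin> Jg g2" using False J2 by (auto simp: J_def)
          then have "g1 t = g1 pr" "g2 t = g2 pr"
            using less.prems tP ex by (auto simp: Jg_def sw_def pr_def P_def)
          then show ?thesis using less.IH[OF pr(2) pr(1)] by simp
        qed
      qed
    qed
    then show "g1 = g2" using g1 g2 by (auto simp: G_def PiE_def extensional_def fun_eq_iff)
  qed
  have fJJ: "finite JJ" using A by (auto simp: JJ_def)
  have "card G = card (code ` G)" using card_image[OF inj] by simp
  also have "\<dots> \<le> card (Sigma JJ (\<lambda>J. PiE (J \<union> F) (\<lambda>_. UNIV :: 's set)))"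
    by (rule card_mono[OF _ sub]) (use fJJ A fF in \<open>auto intro!: finite_SigmaI finite_PiE simp: JJ_def intro: finite_subset\<close>)
  also have "\<dots> = (\<Sum>J\<in>JJ. card (PiE (J \<union> F) (\<lambda>_. UNIV :: 's set)))"
    by (rule card_SigmaI) (use fJJ A fF in \<open>auto intro!: finite_PiE simp: JJ_def intro: finite_subset\<close>)
  also have "\<dots> \<le> (\<Sum>J\<in>JJ. CARD('s) ^ (K * (m + 1)))"
  proof (rule sum_mono)
    fix J assume J: "J \<in> JJ"
    have fJ: "finite J" using J A by (auto simp: JJ_def finite_subset)
    have "card (J \<union> F) \<le> card J + card F" by (rule card_Un_le)
    also have "\<dots> \<le> K * (m + 1)" using J cF by (auto simp: JJ_def)
    finally have c: "card (J \<union> F) \<le> K * (m + 1)" .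
    have "card (PiE (J \<union> F) (\<lambda>_. UNIV :: 's set)) = CARD('s) ^ card (J \<union> F)"
      using fJ fF by (simp add: card_PiE)
    also have "\<dots> \<le> CARD('s) ^ (K * (m + 1))"
      by (rule power_increasing[OF c]) simp
    finally show "card (PiE (J \<union> F) (\<lambda>_. UNIV :: 's set)) \<le> CARD('s) ^ (K * (m + 1))" .
  qed
  also have "\<dots> = card JJ * CARD('s) ^ (K * (m + 1))" by simp
  finally show ?thesis by (simp add: G_def JJ_def)
qed

lemma count_JJ_entropy:
  assumes A: "finite A" "card A \<le> M" and M: "0 < M" "2 * m \<le> M" and K: "1 \<le> K"
  shows "real (card {J. J \<subseteq> A \<and> card J \<le> K * m}) \<le> exp (real K * (real M * bin_entropy (real m / real M)))"
proof (cases "m = 0")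
  case True
  have "{J. J \<subseteq> A \<and> card J \<le> K * m} = {{}}"
    using True A by (auto dest: finite_subset)
  then show ?thesis using True by (simp add: bin_entropy_def)
next
  case False
  define p where "p = real m / real M"
  have p: "0 < p" "p \<le> 1/2" using False M by (auto simp: p_def field_simps)
  have Mp: "real M * p = real m" using M by (simp add: p_def)
  have "real (card {J. J \<subseteq> A \<and> card J \<le> K * m}) \<le> exp (real (K * m) * ln ((1-p)/p) - real M * ln (1-p))"
    by (rule count_J[OF A p])
  also have "\<dots> \<le> exp (real K * (real M * bin_entropy p))"
  proof -
    have l1: "ln (1 - p) \<le> 0" using p by simp
    have ld: "ln ((1-p)/p) = ln (1 - p) - ln p" using p by (simp add: ln_div)
    have e: "real K * (real M * bin_entropy p) = - real K * real m * ln p - real K * (real M - real m) * ln (1 - p)"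
      unfolding bin_entropy_def using Mp by (simp add: algebra_simps flip: Mp)
    have "(real K - 1) * real M * ln (1 - p) \<le> 0"
      using K l1 by (intro mult_nonneg_nonpos) auto
    then have "real (K * m) * ln ((1-p)/p) - real M * ln (1-p) \<le> real K * (real M * bin_entropy p)"
      unfolding e ld by (simp add: algebra_simps)
    then show ?thesis by simp
  qed
  finally show ?thesis by (simp add: p_def)
qed

lemma count_G_exp:
  fixes cf :: "nat \<Rightarrow> 'c"
  assumes A: "finite A" "card A \<le> M" and Cs: "finite Cs" "cf ` A \<subseteq> Cs" "card Cs \<le> K"
    and M: "0 < M" "2 * m \<le> M" and K: "1 \<le> K"
  shows "real (card {g \<in> PiE A (\<lambda>_. UNIV :: 's::finite set). \<forall>c. card (sw g {t\<in>A. cf t = c}) \<le> m})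
     \<le> exp (real K * (real M * bin_entropy (real m / real M) + (real m + 1) * ln (real CARD('s))))"
proof -
  have N: "real CARD('s) \<ge> 1" by (simp add: Suc_le_eq)
  have "real (card {g \<in> PiE A (\<lambda>_. UNIV :: 's::finite set). \<forall>c. card (sw g {t\<in>A. cf t = c}) \<le> m})
      \<le> real (card {J. J \<subseteq> A \<and> card J \<le> K * m}) * real CARD('s) ^ (K * (m + 1))"
    using count_G[OF A(1) Cs, where m = m and 's = 's] by (simp flip: of_nat_mult of_nat_power)
  also have "\<dots> \<le> exp (real K * (real M * bin_entropy (real m / real M))) * exp (real K * ((real m + 1) * ln (real CARD('s))))"
  proof (intro mult_mono count_JJ_entropy[OF A M K])
    have "real CARD('s) ^ (K * (m + 1)) = exp (real (K * (m + 1)) * ln (real CARD('s)))"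
      using N by (simp only: exp_of_nat_mult) simp
    then show "real CARD('s) ^ (K * (m + 1)) \<le> exp (real K * ((real m + 1) * ln (real CARD('s))))"
      by (simp add: algebra_simps)
  qed auto
  also have "\<dots> = exp (real K * (real M * bin_entropy (real m / real M) + (real m + 1) * ln (real CARD('s))))"
    by (simp add: exp_add[symmetric] algebra_simps)
  finally show ?thesis .
qed



lemma sw_cong:
  assumes "finite S" "\<And>t. t \<in> S \<Longrightarrow> f t = g t"
  shows "sw f S = sw g S"
proof -
  have "Max {u\<in>S. u<t} \<in> S" if "\<exists>u\<in>S. u<t" for t
  proof -
    have "Max {u\<in>S. u<t} \<in> {u\<in>S. u<t}" by (rule Max_in) (use that assms in auto)
    then show ?thesis by simp
  qed
  then show ?thesis using assms by (auto simp: sw_def) (metis (no_types, lifting))+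
qed

lemma mod_close:
  fixes u t d :: nat
  assumes "u mod d = t mod d" "u < t" "t - u < d"
  shows False
proof -
  have "d dvd (t - u)" using assms mod_eq_dvd_iff_nat[of u t d] by simp
  moreover have "0 < t - u" using assms by simp
  ultimately have "d \<le> t - u" by (rule dvd_imp_le)
  then show False using assms by simp
qed

lemma ctx_merge:
  assumes t: "t \<in> A" and A: "A = {t\<in>{k+1..n-k}. t mod (k+1) = i}"
  shows "ctx k (merge A zA zB) t = ctx k zB t"
proof -
  have tm: "t mod (k+1) = i" using t A by auto
  have nA: "u \<notin> A" if "u \<noteq> t" "u + k \<ge> t" "u \<le> t + k" for u
  proof
    assume "u \<in> A"
    then have um: "u mod (k+1) = i" using A by auto
    show False
    proof (cases "u < t")
      case True
      moreover have "t - u < k + 1" using that by linarith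
      ultimately show False using mod_close[of u "k+1" t] um tm by auto
    next
      case False
      then have "t < u" using that by auto
      moreover have "u - t < k + 1" using that by linarith
      ultimately show False using mod_close[of t "k+1" u] um tm by auto
    qed
  qed
  show ?thesis unfolding ctx_def using nA by (auto simp: merge_def)
qed

lemma card_ctxs: "card {c :: 'z::finite list \<times> 'z list. length (fst c) = k \<and> length (snd c) = k} = CARD('z) ^ (2 * k)"
proof -
  have "{c :: 'z list \<times> 'z list. length (fst c) = k \<and> length (snd c) = k} =
        {xs. set xs \<subseteq> UNIV \<and> length xs = k} \<times> {xs. set xs \<subseteq> UNIV \<and> length xs = k}" by auto
  moreover have "card {xs::'z list. length xs = k} = CARD('z)^k"
    using card_lists_length_eq[of "UNIV::'z set" k] by simp
  ultimately show ?thesis by (simp add: card_cartesian_product power_add[symmetric] mult_2)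
qed

lemma finite_ctxs: "finite {c :: 'z::finite list \<times> 'z list. length (fst c) = k \<and> length (snd c) = k}"
proof -
  have "{c :: 'z list \<times> 'z list. length (fst c) = k \<and> length (snd c) = k} =
        {xs. set xs \<subseteq> UNIV \<and> length xs = k} \<times> {xs. set xs \<subseteq> UNIV \<and> length xs = k}" by auto
  moreover have "finite {xs::'z list. length xs = k}"
    using finite_lists_length_eq[of "UNIV::'z set" k] by simp
  ultimately show ?thesis by simp
qed

lemma per_i:
  fixes Ch :: "'x \<Rightarrow> 'z::finite \<Rightarrow> real"
    and \<Lambda> :: "'x \<Rightarrow> 'xh::finite \<Rightarrow> real"
    and Y :: "'x \<Rightarrow> ('z \<Rightarrow> 'xh) \<Rightarrow> 'z \<Rightarrow> real"
    and x :: "nat \<Rightarrow> 'x"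
  assumes w0: "\<forall>a z. Ch a z \<ge> 0" and w1: "\<forall>a. (\<Sum>z\<in>UNIV. Ch a z) = 1"
    and E0: "\<And>a s. (\<Sum>v\<in>UNIV. Ch a v * Y a s v) = 0"
    and bd: "\<And>a s v. c \<le> Y a s v \<and> Y a s v \<le> c + L"
    and L: "L > 0" and n: "n > 2 * k" and mM: "2 * m \<le> n - 2 * k"
    and A: "A = {t\<in>{k+1..n-k}. t mod (k+1) = i}" "A \<noteq> {}" and thr: "thr > 0"
  shows "chan_prob Ch n x (\<lambda>z. \<exists>\<sigma>\<in>Sadm k m n z. \<bar>\<Sum>t\<in>A. Y (x t) (\<sigma> t) (z t)\<bar> > thr)
     \<le> exp (real (CARD('z) ^ (2 * k)) * (real (n - 2 * k) * bin_entropy (real m / real (n - 2 * k))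
           + (real m + 1) * ln (real CARD('z \<Rightarrow> 'xh)))) * (2 * exp (- 2 * thr\<^sup>2 / (real (card A) * L\<^sup>2)))"
proof -
  define I where "I = {1..n}"
  define T where "T = {k+1..n-k}"
  define M where "M = n - 2 * k"
  define K where "K = CARD('z) ^ (2 * k)"
  define Cnt where "Cnt = exp (real K * (real M * bin_entropy (real m / real M) + (real m + 1) * ln (real CARD('z \<Rightarrow> 'xh))))"
  define Bd where "Bd = 2 * exp (- 2 * thr\<^sup>2 / (real (card A) * L\<^sup>2))"
  define w where "w = (\<lambda>t. Ch (x t))"
  define Cs where "Cs = {c :: 'z list \<times> 'z list. length (fst c) = k \<and> length (snd c) = k}"
  define G where "G = (\<lambda>zB :: nat \<Rightarrow> 'z. {g \<in> PiE A (\<lambda>_. UNIV :: ('z \<Rightarrow> 'xh) set). \<forall>c. card (sw g {t\<in>A. ctx k zB t = c}) \<le> m})"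
  define E where "E = (\<lambda>z. \<exists>\<sigma>\<in>Sadm k m n z. \<bar>\<Sum>t\<in>A. Y (x t) (\<sigma> t) (z t)\<bar> > thr)"
  have fI: "finite I" by (simp add: I_def)
  have AT: "A \<subseteq> T" using A by (auto simp: T_def)
  have TI: "T \<subseteq> I" by (auto simp: T_def I_def)
  have AI: "A \<subseteq> I" using AT TI by auto
  have fA: "finite A" using A by simp
  have cT: "card T = M" using n by (simp add: T_def M_def)
  have cA: "card A \<le> M" using card_mono[OF _ AT] cT by (simp add: T_def)
  have M0: "0 < M" using n by (simp add: M_def)
  have K1: "1 \<le> K" by (simp add: K_def)
  have cp: "chan_prob Ch n x E = pprob I w E"
    unfolding chan_prob_def pprob_def seqs_def I_def w_def by (rule refl)
  also have "\<dots> = (\<Sum>zB\<in>PiE (I - A) (\<lambda>_. UNIV). (\<Prod>t\<in>I - A. w t (zB t)) * pprob A w (\<lambda>zA. E (merge A zA zB)))"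
    by (rule pprob_split[OF fI AI])
  also have "\<dots> \<le> (\<Sum>zB\<in>PiE (I - A) (\<lambda>_. UNIV). (\<Prod>t\<in>I - A. w t (zB t)) * (Cnt * Bd))"
  proof (rule sum_mono, rule mult_left_mono)
    fix zB :: "nat \<Rightarrow> 'z" assume zB: "zB \<in> PiE (I - A) (\<lambda>_. UNIV)"
    show "0 \<le> (\<Prod>t\<in>I - A. w t (zB t))" using w0 by (intro prod_nonneg) (auto simp: w_def)
    have "pprob A w (\<lambda>zA. E (merge A zA zB)) \<le> (\<Sum>g\<in>G zB. pprob A w (\<lambda>zA. \<bar>\<Sum>t\<in>A. Y (x t) (g t) (zA t)\<bar> > thr))"
    proof (rule pprob_union)
      have "finite (PiE A (\<lambda>_. UNIV :: ('z \<Rightarrow> 'xh) set))" using fA by (intro finite_PiE) auto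
      then show "finite (G zB)" unfolding G_def by (rule finite_subset[rotated]) auto
      fix zA :: "nat \<Rightarrow> 'z" assume zA: "zA \<in> PiE A (\<lambda>_. UNIV)" and EE: "E (merge A zA zB)"
      define z where "z = merge A zA zB"
      obtain \<sigma> where \<sigma>: "\<sigma> \<in> Sadm k m n z" "\<bar>\<Sum>t\<in>A. Y (x t) (\<sigma> t) (z t)\<bar> > thr"
        using EE by (auto simp: E_def z_def)
      define g where "g = restrict \<sigma> A"
      have ctxeq: "ctx k z t = ctx k zB t" if "t \<in> A" for t
        unfolding z_def by (rule ctx_merge[OF that A(1)])
      have "g \<in> G zB"
        unfolding G_def
      proof (intro CollectI conjI allI)
        show "g \<in> PiE A (\<lambda>_. UNIV)" by (simp add: g_def)
        fix cc
        define S' where "S' = {t\<in>A. ctx k zB t = cc}"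
        have S'A: "S' \<subseteq> A" by (auto simp: S'_def)
        have fS': "finite S'" using fA S'A finite_subset by blast
        have "sw g S' = sw \<sigma> S'" by (rule sw_cong[OF fS']) (use S'A in \<open>auto simp: g_def\<close>)
        moreover have "S' \<subseteq> Tset k n z cc" using ctxeq AT by (auto simp: S'_def Tset_def T_def)
        ultimately have "card (sw g S') \<le> card (sw \<sigma> (Tset k n z cc))"
          using sw_mono[of "Tset k n z cc" S' \<sigma>] by (simp add: Tset_def)
        also have "\<dots> = switches \<sigma> (Tset k n z cc)" by (rule switches_sw[symmetric]) (simp add: Tset_def)
        also have "\<dots> \<le> m" using \<sigma>(1) unfolding Sadm_def by blast
        finally show "card (sw g {t\<in>A. ctx k zB t = cc}) \<le> m" by (simp add: S'_def)
      qed
      moreover have "(\<Sum>t\<in>A. Y (x t) (g t) (zA t)) = (\<Sum>t\<in>A. Y (x t) (\<sigma> t) (z t))"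
        by (intro sum.cong) (auto simp: g_def z_def merge_def)
      ultimately show "\<exists>g\<in>G zB. \<bar>\<Sum>t\<in>A. Y (x t) (g t) (zA t)\<bar> > thr" using \<sigma>(2) by metis
    qed (use fA w0 in \<open>auto simp: w_def\<close>)
    also have "\<dots> \<le> (\<Sum>g\<in>G zB. Bd)"
    proof (rule sum_mono)
      fix g assume "g \<in> G zB"
      show "pprob A w (\<lambda>zA. \<bar>\<Sum>t\<in>A. Y (x t) (g t) (zA t)\<bar> > thr) \<le> Bd"
        unfolding Bd_def
        by (rule hoeff_two_sided[OF fA A(2), where c = "\<lambda>_. c"]) (use w0 w1 E0 bd L thr in \<open>auto simp: w_def\<close>)
    qed
    also have "\<dots> = real (card (G zB)) * Bd" by simp
    also have "\<dots> \<le> Cnt * Bd"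
    proof (rule mult_right_mono)
      show "0 \<le> Bd" by (simp add: Bd_def)
      have "ctx k zB ` A \<subseteq> Cs" using A by (auto simp: Cs_def ctx_def)
      show "real (card (G zB)) \<le> Cnt"
        unfolding G_def Cnt_def
      proof (rule count_G_exp[OF fA cA])
        show "finite Cs" unfolding Cs_def by (rule finite_ctxs)
        show "card Cs \<le> K" unfolding Cs_def K_def by (simp add: card_ctxs)
      qed (use M0 mM K1 \<open>ctx k zB ` A \<subseteq> Cs\<close> in \<open>auto simp: M_def\<close>)
    qed
    finally show "pprob A w (\<lambda>zA. E (merge A zA zB)) \<le> Cnt * Bd" .
  qed
  also have "\<dots> = Cnt * Bd"
    using sum_prod_PiE_1[of "I - A" w] fI w1 by (simp add: sum_distrib_right[symmetric] w_def)
  finally show ?thesis by (simp add: E_def Cnt_def Bd_def K_def M_def)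
qed



lemma sqrt_sum_bound:
  fixes Mi :: "nat \<Rightarrow> nat"
  assumes d: "d > 0" and s: "(\<Sum>i<d. Mi i) = M"
  shows "(\<Sum>i<d. sqrt (real (Mi i) * real M / real d)) \<le> real M"
proof -
  have cs: "(\<Sum>i<d. 1 * sqrt (real (Mi i)))\<^sup>2 \<le> (\<Sum>i<d. 1\<^sup>2) * (\<Sum>i<d. (sqrt (real (Mi i)))\<^sup>2)"
    by (rule Cauchy_Schwarz_ineq_sum)
  also have "\<dots> = real d * real M" using s by (simp flip: of_nat_sum)
  finally have "(\<Sum>i<d. sqrt (real (Mi i)))\<^sup>2 \<le> real d * real M" by simp
  then have sq: "(\<Sum>i<d. sqrt (real (Mi i))) \<le> sqrt (real d * real M)"
    by (simp add: real_le_rsqrt)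
  have "(\<Sum>i<d. sqrt (real (Mi i) * real M / real d)) = sqrt (real M / real d) * (\<Sum>i<d. sqrt (real (Mi i)))"
    by (simp add: sum_distrib_left real_sqrt_mult real_sqrt_divide mult.commute)
  also have "\<dots> \<le> sqrt (real M / real d) * sqrt (real d * real M)"
    by (rule mult_left_mono[OF sq]) simp
  also have "\<dots> = sqrt (real M * real M)" using d by (simp add: real_sqrt_mult[symmetric])
  also have "\<dots> = real M" by simp
  finally show ?thesis .
qed

lemma chan_prob_pprob: "chan_prob Ch n x E = pprob {1..n} (\<lambda>t. Ch (x t)) E"
  unfolding chan_prob_def pprob_def seqs_def by (rule refl)

lemma bin_entropy_nonneg: assumes "0 \<le> p" "p \<le> 1" shows "bin_entropy p \<ge> 0"
proof -
  have "p * ln p \<le> 0"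
    using assms by (cases "p = 0") (auto intro!: mult_nonneg_nonpos)
  moreover have "(1 - p) * ln (1 - p) \<le> 0"
    using assms by (cases "p = 1") (auto intro!: mult_nonneg_nonpos)
  ultimately show ?thesis by (simp add: bin_entropy_def)
qed



lemma thr_arith: "(c::real) > 0 \<Longrightarrow> L > 0 \<Longrightarrow> (k::real) \<ge> 0 \<Longrightarrow>
  - 2 * (c * M / (k+1) * e\<^sup>2 / 4) / (c * L\<^sup>2) = - M * e\<^sup>2 / (2 * (k + 1) * L\<^sup>2)"
  by (simp add: divide_simps)

theorem theorem3:
  fixes Ch :: "'x::finite \<Rightarrow> 'z::finite \<Rightarrow> real"
    and \<Lambda> :: "'x \<Rightarrow> 'xh::finite \<Rightarrow> real"
    and H :: "'z \<Rightarrow> 'x \<Rightarrow> real"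
    and k n m :: nat
    and Shat :: "(nat \<Rightarrow> 'z) \<Rightarrow> nat \<Rightarrow> 'z \<Rightarrow> 'xh"
    and \<epsilon> :: real
    and x :: "nat \<Rightarrow> 'x"
  assumes Pi_nonneg: "\<forall>a z. Ch a z \<ge> 0"
    and Pi_stoch: "\<forall>a. (\<Sum>z\<in>UNIV. Ch a z) = 1"
    and Pi_full_row_rank: "\<forall>c :: 'x \<Rightarrow> real. (\<forall>z. (\<Sum>a\<in>UNIV. c a * Ch a z) = 0) \<longrightarrow> (\<forall>a. c a = 0)"
    and PiH: "\<forall>a b. (\<Sum>z\<in>UNIV. Ch a z * H z b) = (if a = b then 1 else 0)"
    and Lam_nonneg: "\<forall>a b. \<Lambda> a b \<ge> 0"
    and n_gt: "n > 2 * k"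
    and m_le: "m \<le> (n - 2 * k) div 2"
    and Shat_min: "\<forall>z\<in>seqs n. Shat z \<in> Sadm k m n z \<and>
        (\<forall>\<sigma>\<in>Sadm k m n z. Ltil \<Lambda> Ch H k n z (Shat z) \<le> Ltil \<Lambda> Ch H k n z \<sigma>)"
    and eps: "\<epsilon> > 0"
  shows "chan_prob Ch n x (\<lambda>z. Lemp \<Lambda> k n x z (Shat z) - Dkm \<Lambda> k m n x z > \<epsilon>)
    \<le> 2 * (real k + 1) * exp (- real (n - 2 * k) *
         (\<epsilon>\<^sup>2 / (2 * (real k + 1) * (L_max \<Lambda> Ch H)\<^sup>2)
          - 2 * real (card (UNIV :: 'z set) ^ (2 * k)) *
            (bin_entropy (real m / real (n - 2 * k))
             + (real m + 1) * ln (real (card (UNIV :: ('z \<Rightarrow> 'xh) set))) / real (n - 2 * k))))"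
proof -
  define M where "M = n - 2 * k"
  define T where "T = {k+1..n-k}"
  define L where "L = L_max \<Lambda> Ch H"
  define K where "K = CARD('z) ^ (2 * k)"
  define N where "N = CARD('z \<Rightarrow> 'xh)"
  define Y where "Y = (\<lambda>a (s::'z\<Rightarrow>'xh) v. \<Lambda> a (s v) - ell \<Lambda> Ch H v s)"
  define ELL where "ELL = {ell \<Lambda> Ch H z s | z s. True}"
  define LAM where "LAM = {\<Lambda> a b | a b. True}"
  define Ev where "Ev = (\<lambda>z. Lemp \<Lambda> k n x z (Shat z) - Dkm \<Lambda> k m n x z > \<epsilon>)"
  define Tc where "Tc = (\<lambda>i. {t\<in>T. t mod (k+1) = i})"
  define thr where "thr = (\<lambda>i. sqrt (real (card (Tc i)) * real M / real (k+1)) * \<epsilon> / 2)"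
  define Ei where "Ei = (\<lambda>i z. \<exists>\<sigma>\<in>Sadm k m n z. \<bar>\<Sum>t\<in>Tc i. Y (x t) (\<sigma> t) (z t)\<bar> > thr i)"
  define Cnt where "Cnt = exp (real K * (real M * bin_entropy (real m / real M) + (real m + 1) * ln (real N)))"
  define Bd where "Bd = exp (- real M * \<epsilon>\<^sup>2 / (2 * (real k + 1) * L\<^sup>2))"
  have M0: "M > 0" using n_gt by (simp add: M_def)
  have cT: "card T = M" using n_gt by (simp add: T_def M_def)
  have fT: "finite T" by (simp add: T_def)
  have fELL: "finite ELL" "ELL \<noteq> {}"
  proof -
    have "ELL = (\<lambda>(z, s). ell \<Lambda> Ch H z s) ` UNIV" by (auto simp: ELL_def)
    then show "finite ELL" by simp
    show "ELL \<noteq> {}" by (auto simp: ELL_def)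
  qed
  have fLAM: "finite LAM" "LAM \<noteq> {}"
  proof -
    have "LAM = (\<lambda>(a, b). \<Lambda> a b) ` UNIV" by (auto simp: LAM_def)
    then show "finite LAM" by simp
    show "LAM \<noteq> {}" by (auto simp: LAM_def)
  qed
  have Lam_le: "\<Lambda> a b \<le> Lam_max \<Lambda>" for a b
    unfolding Lam_max_def using Max_ge[OF fLAM(1)] by (auto simp: LAM_def)
  have ell_le: "Min ELL \<le> ell \<Lambda> Ch H z s \<and> ell \<Lambda> Ch H z s \<le> Max ELL" for z s
    using Max_ge[OF fELL(1)] Min_le[OF fELL(1)] by (auto simp: ELL_def)
  have Lm0: "Lam_max \<Lambda> \<ge> 0" using Lam_le[of undefined undefined] Lam_nonneg by (meson order.trans)
  have em0: "ell_max \<Lambda> Ch H = Max ELL - Min ELL" by (simp add: ell_max_def ELL_def)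
  have em0': "Max ELL - Min ELL \<ge> 0" using ell_le[of undefined undefined] by simp
  have L_eq: "L = Lam_max \<Lambda> + (Max ELL - Min ELL)" by (simp add: L_def L_max_def em0)
  have bdY: "- Max ELL \<le> Y a s v \<and> Y a s v \<le> - Max ELL + L" for a s v
  proof -
    have "\<Lambda> a (s v) \<ge> 0" using Lam_nonneg by blast
    then show ?thesis using ell_le[of v s] Lam_le[of a "s v"] L_eq by (auto simp: Y_def)
  qed
  have E0: "(\<Sum>v\<in>UNIV. Ch a v * Y a s v) = 0" for a s
  proof -
    have "(\<Sum>v\<in>UNIV. Ch a v * ell \<Lambda> Ch H v s) = (\<Sum>b\<in>UNIV. (\<Sum>v\<in>UNIV. Ch a v * H v b) * rho \<Lambda> Ch b s)"
      unfolding ell_def by (simp add: sum_distrib_left sum_distrib_right mult.assoc) (rule sum.swap)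
    also have "\<dots> = (\<Sum>b\<in>UNIV. (if a = b then rho \<Lambda> Ch b s else 0))"
      using PiH by (intro sum.cong) auto
    also have "\<dots> = rho \<Lambda> Ch a s" by simp
    also have "\<dots> = (\<Sum>v\<in>UNIV. Ch a v * \<Lambda> a (s v))" by (simp add: rho_def mult.commute)
    finally show ?thesis by (simp add: Y_def right_diff_distrib sum_subtractf)
  qed
  have rhs_nonneg: "0 \<le> 2 * (real k + 1) * exp (- real (n - 2 * k) *
         (\<epsilon>\<^sup>2 / (2 * (real k + 1) * (L_max \<Lambda> Ch H)\<^sup>2)
          - 2 * real (card (UNIV :: 'z set) ^ (2 * k)) *
            (bin_entropy (real m / real (n - 2 * k))
             + (real m + 1) * ln (real (card (UNIV :: ('z \<Rightarrow> 'xh) set))) / real (n - 2 * k))))"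
    by simp
  have chan0: "chan_prob Ch n x E = 0" if "\<And>z. z \<in> seqs n \<Longrightarrow> \<not> E z" for E
    unfolding chan_prob_def using that by (intro sum.neutral) auto
  have Sne: "Shat z \<in> Sadm k m n z" if "z \<in> seqs n" for z using Shat_min that by blast
  have fS: "finite (Sadm k m n z :: (nat \<Rightarrow> 'z \<Rightarrow> 'xh) set)" for z
  proof -
    have "finite (PiE {k+1..n-k} (\<lambda>_. UNIV :: ('z \<Rightarrow> 'xh) set))" by (intro finite_PiE) auto
    then show ?thesis unfolding Sadm_def by (rule finite_subset[rotated]) auto
  qed
  show ?thesis
  proof (cases "L = 0")
    case True
    then have "Lam_max \<Lambda> = 0" using L_eq Lm0 em0' by simp
    then have L0: "\<Lambda> a b = 0" for a b using Lam_le[of a b] Lam_nonneg by (simp add: order_antisym)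
    have Lemp0: "Lemp \<Lambda> k n x z \<sigma> = 0" for z \<sigma> by (simp add: Lemp_def L0)
    have "chan_prob Ch n x Ev = 0"
    proof (rule chan0)
      fix z :: "nat \<Rightarrow> 'z" assume z: "z \<in> seqs n"
      have "Lemp \<Lambda> k n x z ` Sadm k m n z = {0}" using Sne[OF z] by (auto simp: Lemp0)
      then show "\<not> Ev z" using eps by (simp add: Ev_def Dkm_def Lemp0)
    qed
    then show ?thesis using rhs_nonneg by (simp add: Ev_def)
  next
    case False
    have Lpos: "L > 0" using False L_eq Lm0 em0' by simp
    have cover: "\<exists>i\<in>{..<k+1}. Ei i z" if z: "z \<in> seqs n" and ev: "Ev z" for z
    proof -
      define D where "D = (\<lambda>\<sigma>::nat \<Rightarrow> 'z \<Rightarrow> 'xh. \<Sum>t\<in>T. Y (x t) (\<sigma> t) (z t))"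
      have LL: "Lemp \<Lambda> k n x z \<sigma> - Ltil \<Lambda> Ch H k n z \<sigma> = D \<sigma> / real M" for \<sigma>
        by (simp add: Lemp_def Ltil_def D_def Y_def T_def M_def sum_subtractf diff_divide_distrib)
      have "Dkm \<Lambda> k m n x z \<in> Lemp \<Lambda> k n x z ` Sadm k m n z"
        unfolding Dkm_def by (rule Min_in) (use fS Sne[OF z] in auto)
      then obtain \<sigma>s where \<sigma>s: "\<sigma>s \<in> Sadm k m n z" "Dkm \<Lambda> k m n x z = Lemp \<Lambda> k n x z \<sigma>s" by auto
      have lt: "Ltil \<Lambda> Ch H k n z (Shat z) \<le> Ltil \<Lambda> Ch H k n z \<sigma>s" using Shat_min z \<sigma>s(1) by blast
      have "D (Shat z) / real M - D \<sigma>s / real M > \<epsilon>"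
        using ev lt LL[of "Shat z"] LL[of \<sigma>s] \<sigma>s(2) by (simp add: Ev_def)
      then have "D (Shat z) - D \<sigma>s > \<epsilon> * real M" using M0 by (simp add: field_simps)
      then have "\<exists>\<sigma>\<in>Sadm k m n z. \<bar>D \<sigma>\<bar> > real M * \<epsilon> / 2"
      proof (cases "\<bar>D (Shat z)\<bar> > real M * \<epsilon> / 2")
        case True
        then show ?thesis using Sne[OF z] by blast
      next
        case False
        then have "\<bar>D \<sigma>s\<bar> > real M * \<epsilon> / 2" using \<open>D (Shat z) - D \<sigma>s > \<epsilon> * real M\<close> mult.commute[of \<epsilon> "real M"] by (simp add: abs_if split: if_splits)
        then show ?thesis using \<sigma>s(1) by blast
      qed
      then obtain \<sigma> where \<sigma>: "\<sigma> \<in> Sadm k m n z" "\<bar>D \<sigma>\<bar> > real M * \<epsilon> / 2" by blast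
      show ?thesis
      proof (rule ccontr)
        assume "\<not> ?thesis"
        then have le: "\<bar>\<Sum>t\<in>Tc i. Y (x t) (\<sigma> t) (z t)\<bar> \<le> thr i" if "i < k+1" for i
          using \<sigma>(1) that by (auto simp: Ei_def not_less)
        have "D \<sigma> = (\<Sum>i<k+1. \<Sum>t\<in>Tc i. Y (x t) (\<sigma> t) (z t))"
          unfolding D_def Tc_def by (rule sum.group[symmetric]) (use fT in auto)
        then have "\<bar>D \<sigma>\<bar> \<le> (\<Sum>i<k+1. \<bar>\<Sum>t\<in>Tc i. Y (x t) (\<sigma> t) (z t)\<bar>)"
          by (simp only: sum_abs)
        also have "\<dots> \<le> (\<Sum>i<k+1. thr i)" by (intro sum_mono le) auto
        also have "\<dots> = (\<Sum>i<k+1. sqrt (real (card (Tc i)) * real M / real (k+1))) * \<epsilon> / 2"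
          unfolding thr_def by (simp add: sum_divide_distrib[symmetric] sum_distrib_right[symmetric] del: sum.lessThan_Suc)
        also have "\<dots> \<le> real M * \<epsilon> / 2"
        proof -
          have "(\<Sum>i<k+1. card (Tc i)) = M"
          proof -
            have "(\<Sum>i<k+1. card (Tc i)) = (\<Sum>i<k+1. \<Sum>t\<in>Tc i. 1)" by simp
            also have "\<dots> = (\<Sum>t\<in>T. 1)"
              unfolding Tc_def by (rule sum.group) (use fT in auto)
            finally show ?thesis using cT by simp
          qed
          then have "(\<Sum>i<k+1. sqrt (real (card (Tc i)) * real M / real (k+1))) \<le> real M"
            by (intro sqrt_sum_bound) auto
          then show ?thesis using eps by (simp add: divide_right_mono mult_right_mono)
        qed
        finally show False using \<sigma>(2) by simp
      qed
    qed
    have "chan_prob Ch n x Ev \<le> (\<Sum>i<k+1. chan_prob Ch n x (Ei i))"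
      unfolding chan_prob_pprob
      by (rule pprob_union) (use cover Pi_nonneg in \<open>auto simp: seqs_def\<close>)
    also have "\<dots> \<le> (\<Sum>i<k+1. Cnt * (2 * Bd))"
    proof (rule sum_mono)
      fix i assume i: "i \<in> {..<k+1}"
      show "chan_prob Ch n x (Ei i) \<le> Cnt * (2 * Bd)"
      proof (cases "Tc i = {}")
        case True
        have "chan_prob Ch n x (Ei i) = 0"
          by (rule chan0) (use True in \<open>auto simp: Ei_def thr_def\<close>)
        then show ?thesis by (simp add: Cnt_def Bd_def)
      next
        case False
        have cpos: "card (Tc i) > 0" using False fT by (auto simp: Tc_def card_gt_0_iff)
        have tpos: "thr i > 0" using cpos M0 eps by (simp add: thr_def)
        have "chan_prob Ch n x (Ei i) \<le> Cnt * (2 * exp (- 2 * (thr i)\<^sup>2 / (real (card (Tc i)) * L\<^sup>2)))"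
          unfolding Ei_def Cnt_def K_def M_def N_def
          by (rule per_i[OF _ _ E0 bdY Lpos n_gt _ _ False tpos])
             (use Pi_nonneg Pi_stoch m_le in \<open>auto simp: Tc_def T_def\<close>)
        also have "- 2 * (thr i)\<^sup>2 / (real (card (Tc i)) * L\<^sup>2) = - real M * \<epsilon>\<^sup>2 / (2 * (real k + 1) * L\<^sup>2)"
        proof -
          have th: "(thr i)\<^sup>2 = real (card (Tc i)) * real M / (real k + 1) * \<epsilon>\<^sup>2 / 4"
            by (simp add: thr_def power_mult_distrib power_divide)
          show ?thesis unfolding th by (rule thr_arith) (use cpos Lpos in auto)
        qed
        finally show ?thesis by (simp add: Bd_def)
      qed
    qed
    also have "\<dots> = 2 * (real k + 1) * (Cnt * Bd)" by simp
    also have "\<dots> \<le> 2 * (real k + 1) * exp (- real M * (\<epsilon>\<^sup>2 / (2 * (real k + 1) * L\<^sup>2)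
          - 2 * real K * (bin_entropy (real m / real M) + (real m + 1) * ln (real N) / real M)))"
    proof (rule mult_left_mono)
      define X where "X = real M * bin_entropy (real m / real M) + (real m + 1) * ln (real N)"
      have hX: "X \<ge> 0"
      proof -
        have "real m / real M \<le> 1" using m_le M0 by (simp add: M_def field_simps)
        then have "bin_entropy (real m / real M) \<ge> 0" by (intro bin_entropy_nonneg) auto
        moreover have "ln (real N) \<ge> 0" by (simp add: N_def Suc_le_eq)
        ultimately show ?thesis by (simp add: X_def)
      qed
      have "Cnt * Bd = exp (real K * X - real M * \<epsilon>\<^sup>2 / (2 * (real k + 1) * L\<^sup>2))"
        by (simp add: Cnt_def Bd_def X_def exp_add[symmetric])
      also have "\<dots> \<le> exp (2 * real K * X - real M * \<epsilon>\<^sup>2 / (2 * (real k + 1) * L\<^sup>2))"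
        using hX by (simp add: mult_right_mono)
      also have "2 * real K * X - real M * \<epsilon>\<^sup>2 / (2 * (real k + 1) * L\<^sup>2) = - real M * (\<epsilon>\<^sup>2 / (2 * (real k + 1) * L\<^sup>2)
          - 2 * real K * (bin_entropy (real m / real M) + (real m + 1) * ln (real N) / real M))"
        using M0 by (simp add: X_def field_simps)
      finally show "Cnt * Bd \<le> exp (- real M * (\<epsilon>\<^sup>2 / (2 * (real k + 1) * L\<^sup>2)
          - 2 * real K * (bin_entropy (real m / real M) + (real m + 1) * ln (real N) / real M)))" .
    qed simp
    finally show ?thesis by (simp add: Ev_def M_def L_def K_def N_def)
  qed
qed

end
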